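(* Let $n\ge2$, let $K\ge0$ be a measurable function on $\mathbb{R}^n$ with $K\in L^\infty(\mathbb{R}^n\setminus B_1)$, and let $v$ be a function with $Ke^{nv}\in L^1(\mathbb{R}^n)$ satisfying, for some $c\in\mathbb{R}$ and all $x\in\mathbb{R}^n$, $$v(x)=\frac{1}{\gamma_n}\int_{\mathbb{R}^n}\log\left(\frac{1+|y|}{|x-y|}\right)K(y)e^{nv(y)}dy+c.$$ Then $$\lim_{|x|\to\infty}\frac{v(x)}{\log|x|}=-\frac{1}{\gamma_n}\int_{\mathbb{R}^n}Ke^{nv}dx.$$
   Context: $|S^n|$ is the volume of the unit $n$-sphere and $\gamma_n:=\frac{(n-1)!}{2}|S^n|$; $B_1$ is the unit ball centered at the origin. *)

theory Defs
  imports "HOL-Analysis.Analysis"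
begin

text \<open>Volume (surface measure) of the unit n-sphere S^n in R^(n+1).\<close>
definition sphere_vol :: "nat \<Rightarrow> real" where
  "sphere_vol n = 2 * pi powr ((real n + 1) / 2) / Gamma ((real n + 1) / 2)"

definition gamma_const :: "nat \<Rightarrow> real" where
  "gamma_const n = fact (n - 1) / 2 * sphere_vol n"

end

theory Submission
  imports Defs
begin


lemma ind_ball_meas[measurable]: "(indicator (ball x r) :: 'a::euclidean_space \<Rightarrow> real) \<in> borel_measurable borel"
  by (intro borel_measurable_indicator) auto
lemma leb_meas: "g \<in> borel_measurable borel \<Longrightarrow> g \<in> borel_measurable (lebesgue :: 'a::euclidean_space measure)"
  by (simp add: measurable_completion)
lemma leb_mul:
  assumes "g \<in> borel_measurable borel" "f \<in> borel_measurable lebesgue"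
  shows "(\<lambda>y. g y * f y :: real) \<in> borel_measurable (lebesgue :: 'a::euclidean_space measure)"
  using borel_measurable_times[OF leb_meas[OF assms(1)] assms(2)] .

lemma pt_lower:
  fixes x y :: "real^'n"
  assumes "norm x \<ge> 1"
  shows "0 \<le> ln ((1 + norm y) / norm (x - y)) + ln (norm x)"
proof (cases "y = x")
  case True
  then show ?thesis using assms by simp
next
  case False
  then have d: "norm (x - y) > 0" by simp
  have tri: "norm (x - y) \<le> norm x + norm y" by (rule norm_triangle_ineq4)
  have "1 * norm y \<le> norm x * norm y" by (rule mult_right_mono) (use assms in auto)
  then have "norm (x - y) \<le> norm x * (1 + norm y)"
    using tri by (simp add: algebra_simps)
  then have "1 \<le> norm x * ((1 + norm y) / norm (x - y))"
    using d by (simp add: field_simps)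
  then have "0 \<le> ln (norm x * ((1 + norm y) / norm (x - y)))" by simp
  also have "\<dots> = ln (norm x) + ln ((1 + norm y) / norm (x - y))"
    using d assms by (intro ln_mult_pos) (auto intro!: divide_pos_pos add_pos_nonneg)
  finally show ?thesis by simp
qed

lemma pt_upper:
  fixes x y :: "real^'n"
  assumes R3: "norm x \<ge> 3" and rho: "0 \<le> \<rho>" "2*\<rho> \<le> norm x"
  shows "ln ((1 + norm y) / norm (x - y)) + ln (norm x) \<le> ln 2 + ln (1+\<rho>)
    + 5 * ln (norm x) * indicator {y. \<rho> < norm y} y + indicator (ball x 1) y * (- ln (norm (x - y)))"
proof -
  define R where "R = norm x"
  define d where "d = norm (x - y)"
  define r where "r = norm y"
  have lnR: "ln R \<ge> 0" using R3 R_def by simp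
  have x0: "x \<noteq> 0" using R3 by auto
  have lnrho: "ln (1+\<rho>) \<ge> 0" using rho by simp
  have ln2: "ln (2::real) \<ge> 0" by simp
  have t1: "r \<le> R + d" unfolding r_def R_def d_def
    using norm_triangle_sub[of y x] by (simp add: norm_minus_commute)
  have t2: "R \<le> r + d" unfolding r_def R_def d_def
    using norm_triangle_sub[of x y] by simp
  show ?thesis
  proof (cases "y = x")
    case True
    have "\<rho> < R" using R3 rho R_def by linarith
    then show ?thesis using True lnR lnrho ln2 by (simp add: R_def)
  next
    case False
    then have d: "d > 0" by (simp add: d_def)
    have r1: "1 + r > 0" by (simp add: r_def add_pos_nonneg)
    have lnd: "ln ((1 + r) / d) = ln (1 + r) - ln d" using r1 d by (rule ln_divide_pos)
    show ?thesis
    proof (cases "r \<le> \<rho>")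
      case True
      have dR: "d \<ge> R / 2" using t2 True rho R_def by linarith
      have "ln (1 + r) \<le> ln (1 + \<rho>)" using True r1 by simp
      moreover have "ln (R/2) \<le> ln d" using dR R3 R_def d by (subst ln_le_cancel_iff) auto
      moreover have "ln (R/2) = ln R - ln 2" using R3 R_def x0 by (simp add: ln_div)
      moreover have "y \<notin> ball x 1" using dR R3 R_def by (simp add: d_def dist_norm)
      ultimately show ?thesis using lnd True
        by (simp add: R_def[symmetric] d_def[symmetric] r_def[symmetric])
    next
      case False
      have ind: "indicator {y. \<rho> < norm y} y = (1::real)" using False by (simp add: r_def)
      have R2: "ln (R + 2) \<le> ln 2 + ln R"
      proof -
        have "ln (R + 2) \<le> ln (2 * R)" using R3 R_def by (subst ln_le_cancel_iff) auto
        also have "\<dots> = ln 2 + ln R" using R3 R_def x0 by (simp add: ln_mult)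
        finally show ?thesis .
      qed
      show ?thesis
      proof (cases "d \<ge> 1")
        case True
        have "(1 + r) / d \<le> R + 2"
        proof -
          have "R * 1 \<le> R * d" using True R3 R_def by (intro mult_left_mono) auto
          then have "1 + r \<le> (R + 2) * d" using t1 True by (simp add: algebra_simps)
          then show ?thesis using d by (simp add: field_simps)
        qed
        then have "ln ((1 + r) / d) \<le> ln (R + 2)" using d r1 R3 R_def by (subst ln_le_cancel_iff) auto
        moreover have "y \<notin> ball x 1" using True by (simp add: d_def dist_norm)
        ultimately show ?thesis using ind R2 lnR lnrho
          by (simp add: R_def[symmetric] d_def[symmetric] r_def[symmetric])
      next
        case False
        have "ln (1 + r) \<le> ln (R + 2)" using t1 False r1 R3 R_def by (subst ln_le_cancel_iff) auto
        moreover have "y \<in> ball x 1" using False by (simp add: d_def dist_norm)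
        ultimately show ?thesis using ind R2 lnR lnrho lnd
          by (simp add: R_def[symmetric] d_def[symmetric] r_def[symmetric])
      qed
    qed
  qed
qed


lemma open_sets_lebesgue: "open S \<Longrightarrow> S \<in> sets lebesgue"
  by (metis borel_open sets_completionI_sets sets_lborel)

lemma ind_int:
  fixes f :: "real^'n \<Rightarrow> real"
  assumes "integrable lebesgue f" "open S"
  shows "integrable lebesgue (\<lambda>y. indicator S y * f y)"
  using integrable_mult_indicator[OF open_sets_lebesgue[OF assms(2)] assms(1)] by simp

lemma open_norm_gt: "open {y::'a::real_normed_vector. b < norm y}"
  by (intro open_Collect_less continuous_intros)

lemma tail_small:
  fixes f :: "real^'n \<Rightarrow> real"
  assumes fm[measurable]: "f \<in> borel_measurable lebesgue" and fi: "integrable lebesgue f" and eps: "\<epsilon> > 0"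
  shows "\<exists>\<rho>::nat. (LINT y|lebesgue. indicator {y. real \<rho> < norm y} y * f y) < \<epsilon>"
proof -
  define s where "s n y = indicator {y. real n < norm y} y * f y" for n :: nat and y
  have sm: "\<And>n. s n \<in> borel_measurable lebesgue" unfolding s_def
    by (rule borel_measurable_times[OF borel_measurable_indicator[OF open_sets_lebesgue[OF open_norm_gt]] fm])
  have h1: "(\<lambda>_. 0::real) \<in> borel_measurable lebesgue" by simp
  have h3: "integrable lebesgue (\<lambda>y. norm (f y))" using fi by simp
  have h4: "AE y in lebesgue. (\<lambda>n. s n y) \<longlonglongrightarrow> 0"
  proof (rule AE_I2)
    fix y :: "real^'n"
    have "\<forall>n\<ge>nat \<lceil>norm y\<rceil>. s n y = 0"
    proof (intro allI impI)
      fix n assume "n \<ge> nat \<lceil>norm y\<rceil>"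
      then have "norm y \<le> real n" by linarith
      then show "s n y = 0" by (simp add: s_def)
    qed
    then have "eventually (\<lambda>n. s n y = 0) sequentially" by (intro eventually_sequentiallyI[of "nat \<lceil>norm y\<rceil>"]) blast
    then show "(\<lambda>n. s n y) \<longlonglongrightarrow> 0" by (rule tendsto_eventually)
  qed
  have h5: "\<And>n. AE y in lebesgue. norm (s n y) \<le> norm (f y)"
    by (auto simp: s_def indicator_def)
  have lim: "(\<lambda>n. integral\<^sup>L lebesgue (s n)) \<longlonglongrightarrow> integral\<^sup>L lebesgue (\<lambda>_. 0::real)"
    using integral_dominated_convergence[OF h1 sm h3 h4 h5] by simp
  then have "eventually (\<lambda>n. integral\<^sup>L lebesgue (s n) < \<epsilon>) sequentially"
    using eps by (intro order_tendstoD(2)) auto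
  then obtain n where "integral\<^sup>L lebesgue (s n) < \<epsilon>" by (auto simp: eventually_sequentially)
  then show ?thesis unfolding s_def by blast
qed

lemma tail_mono:
  fixes f :: "real^'n \<Rightarrow> real"
  assumes fm[measurable]: "f \<in> borel_measurable lebesgue" and fi: "integrable lebesgue f" and f0: "\<And>y. f y \<ge> 0"
    and "a \<le> b"
  shows "(LINT y|lebesgue. indicator {y. b < norm y} y * f y) \<le> (LINT y|lebesgue. indicator {y. a < norm y} y * f y)"
proof (rule integral_mono)
  show "integrable lebesgue (\<lambda>y. indicator {y. b < norm y} y * f y)"
    using fi open_norm_gt by (intro ind_int) auto
  show "integrable lebesgue (\<lambda>y. indicator {y. a < norm y} y * f y)"
    using fi open_norm_gt by (intro ind_int) auto
  fix y show "indicator {y. b < norm y} y * f y \<le> indicator {y. a < norm y} y * f y"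
    using assms(4) f0[of y] by (auto simp: indicator_def)
qed

lemma w_integrable:
  fixes f :: "real^'n \<Rightarrow> real"
  assumes fm[measurable]: "f \<in> borel_measurable lebesgue" and fi: "integrable lebesgue f" and f0: "\<And>y. f y \<ge> 0"
    and hi: "integrable lebesgue (\<lambda>y. ln ((1 + norm y) / norm (x - y)) * f y)"
  shows "integrable lebesgue (\<lambda>y. indicator (ball x 1) y * (- ln (norm (x - y))) * f y)"
proof (rule Bochner_Integration.integrable_bound)
  show "integrable lebesgue (\<lambda>y. norm (ln ((1 + norm y) / norm (x - y)) * f y) + ln (2 + norm x) * f y)"
    by (rule Bochner_Integration.integrable_add[OF integrable_norm[OF hi] integrable_mult_right[OF fi]])
  show "(\<lambda>y. indicator (ball x 1) y * (- ln (norm (x - y))) * f y) \<in> borel_measurable lebesgue"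
    by (rule leb_mul[OF _ fm]) measurable
  show "AE y in lebesgue. norm (indicator (ball x 1) y * (- ln (norm (x - y))) * f y)
      \<le> norm (norm (ln ((1 + norm y) / norm (x - y)) * f y) + ln (2 + norm x) * f y)"
  proof (rule AE_I2)
    fix y :: "real^'n"
    have l2: "ln (2 + norm x) \<ge> 0" by simp
    have rhs0: "0 \<le> norm (ln ((1 + norm y) / norm (x - y)) * f y) + ln (2 + norm x) * f y"
      using l2 f0[of y] by simp
    show "norm (indicator (ball x 1) y * (- ln (norm (x - y))) * f y)
      \<le> norm (norm (ln ((1 + norm y) / norm (x - y)) * f y) + ln (2 + norm x) * f y)"
    proof (cases "y \<in> ball x 1 \<and> y \<noteq> x")
      case False
      then show ?thesis using rhs0 by (auto simp: indicator_def)
    next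
      case True
      define d where "d = norm (x - y)"
      have d: "0 < d" "d < 1" using True by (auto simp: d_def dist_norm)
      have r1: "0 < 1 + norm y" by (simp add: add_pos_nonneg)
      have lnd: "- ln d \<ge> 0" using d by simp
      have eq: "ln ((1 + norm y) / d) = ln (1 + norm y) - ln d" using r1 d(1) by (rule ln_divide_pos)
      have "norm y \<le> norm x + d" unfolding d_def using norm_triangle_sub[of y x] by (simp add: norm_minus_commute)
      then have l1: "ln (1 + norm y) \<le> ln (2 + norm x)" using r1 d by (subst ln_le_cancel_iff) auto
      have l10: "ln (1 + norm y) \<ge> 0" by simp
      have "norm (indicator (ball x 1) y * (- ln (norm (x - y))) * f y) = (- ln d) * f y"
        using True lnd f0[of y] by (simp add: d_def abs_mult)
      also have "\<dots> = ln ((1 + norm y) / d) * f y - ln (1 + norm y) * f y"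
        by (simp add: eq algebra_simps)
      also have "\<dots> \<le> norm (ln ((1 + norm y) / d) * f y) + ln (2 + norm x) * f y"
      proof -
        have "ln ((1 + norm y) / d) * f y \<le> norm (ln ((1 + norm y) / d) * f y)" by simp
        moreover have "- (ln (1 + norm y) * f y) \<le> ln (2 + norm x) * f y"
          using l10 l2 f0[of y] by (smt (verit) mult_nonneg_nonneg)
        ultimately show ?thesis by simp
      qed
      finally show ?thesis using rhs0 by (simp add: d_def)
    qed
  qed
qed




lemma split_bound:
  fixes f :: "real^'n \<Rightarrow> real" and x :: "real^'n"
  assumes fm: "f \<in> borel_measurable lebesgue" and fi: "integrable lebesgue f" and f0: "\<And>y. f y \<ge> 0"
    and hi: "integrable lebesgue (\<lambda>y. ln ((1 + norm y) / norm (x - y)) * f y)"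
    and R3: "norm x \<ge> 3" and rho: "0 \<le> \<rho>" "2*\<rho> \<le> norm x"
  shows "(LINT y|lebesgue. ln ((1 + norm y) / norm (x - y)) * f y) + (LINT y|lebesgue. f y) * ln (norm x)
     \<le> (ln 2 + ln (1+\<rho>)) * (LINT y|lebesgue. f y)
       + 5 * ln (norm x) * (LINT y|lebesgue. indicator {y. \<rho> < norm y} y * f y)
       + (LINT y|lebesgue. indicator (ball x 1) y * (- ln (norm (x - y))) * f y)"
proof -
  have wi: "integrable lebesgue (\<lambda>y. indicator (ball x 1) y * (- ln (norm (x - y))) * f y)"
    by (rule w_integrable[OF fm fi f0 hi])
  have ti: "integrable lebesgue (\<lambda>y. indicator {y. \<rho> < norm y} y * f y)"
    using fi open_norm_gt by (intro ind_int) auto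
  have "(LINT y|lebesgue. ln ((1 + norm y) / norm (x - y)) * f y) + (LINT y|lebesgue. f y) * ln (norm x)
      = (LINT y|lebesgue. ln ((1 + norm y) / norm (x - y)) * f y + ln (norm x) * f y)"
    using hi fi by (simp add: Bochner_Integration.integral_add integral_mult_right_zero mult.commute)
  also have "\<dots> \<le> (LINT y|lebesgue. (ln 2 + ln (1+\<rho>)) * f y
       + 5 * ln (norm x) * (indicator {y. \<rho> < norm y} y * f y)
       + indicator (ball x 1) y * (- ln (norm (x - y))) * f y)"
  proof (rule integral_mono)
    show "integrable lebesgue (\<lambda>y. ln ((1 + norm y) / norm (x - y)) * f y + ln (norm x) * f y)"
      using hi fi by (intro Bochner_Integration.integrable_add integrable_mult_right)
    show "integrable lebesgue (\<lambda>y. (ln 2 + ln (1+\<rho>)) * f y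
       + 5 * ln (norm x) * (indicator {y. \<rho> < norm y} y * f y)
       + indicator (ball x 1) y * (- ln (norm (x - y))) * f y)"
      using wi ti fi by (intro Bochner_Integration.integrable_add integrable_mult_right)
    fix y
    have "(ln ((1 + norm y) / norm (x - y)) + ln (norm x)) * f y \<le> (ln 2 + ln (1+\<rho>)
      + 5 * ln (norm x) * indicator {y. \<rho> < norm y} y + indicator (ball x 1) y * (- ln (norm (x - y)))) * f y"
      by (rule mult_right_mono[OF pt_upper[OF R3 rho] f0])
    then show "ln ((1 + norm y) / norm (x - y)) * f y + ln (norm x) * f y \<le> (ln 2 + ln (1+\<rho>)) * f y
       + 5 * ln (norm x) * (indicator {y. \<rho> < norm y} y * f y)
       + indicator (ball x 1) y * (- ln (norm (x - y))) * f y"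
      by (simp add: algebra_simps)
  qed
  also have "\<dots> = (ln 2 + ln (1+\<rho>)) * (LINT y|lebesgue. f y)
       + 5 * ln (norm x) * (LINT y|lebesgue. indicator {y. \<rho> < norm y} y * f y)
       + (LINT y|lebesgue. indicator (ball x 1) y * (- ln (norm (x - y))) * f y)"
    using wi ti fi
    by (simp add: Bochner_Integration.integral_add integral_mult_right_zero
        Bochner_Integration.integrable_add integrable_mult_right)
  finally show ?thesis .
qed

lemma split_lower:
  fixes f :: "real^'n \<Rightarrow> real" and x :: "real^'n"
  assumes fi: "integrable lebesgue f" and f0: "\<And>y. f y \<ge> 0"
    and hi: "integrable lebesgue (\<lambda>y. ln ((1 + norm y) / norm (x - y)) * f y)"
    and R1: "norm x \<ge> 1"
  shows "0 \<le> (LINT y|lebesgue. ln ((1 + norm y) / norm (x - y)) * f y) + (LINT y|lebesgue. f y) * ln (norm x)"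
proof -
  have "(LINT y|lebesgue. ln ((1 + norm y) / norm (x - y)) * f y) + (LINT y|lebesgue. f y) * ln (norm x)
      = (LINT y|lebesgue. (ln ((1 + norm y) / norm (x - y)) + ln (norm x)) * f y)"
    using hi fi by (simp add: Bochner_Integration.integral_add integral_mult_right_zero
        mult.commute distrib_left)
  also have "\<dots> \<ge> 0"
    by (intro integral_nonneg_AE AE_I2 mult_nonneg_nonneg pt_lower[OF R1] f0)
  finally show ?thesis by simp
qed

lemma jensen_exp:
  fixes f :: "real^'n \<Rightarrow> real" and x y :: "real^'n"
  assumes fm: "f \<in> borel_measurable lebesgue" and fi: "integrable lebesgue f" and f0: "\<And>y. f y \<ge> 0"
    and wyi: "integrable lebesgue (\<lambda>z. indicator (ball y 1) z * (- ln (norm (y - z))) * f z)"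
    and y: "y \<in> ball x 1" and t: "t \<ge> 0"
    and mdef: "m = (LINT z|lebesgue. indicator (ball x 2) z * f z)" and m0: "m > 0"
  shows "ennreal (m * exp (t * (LINT z|lebesgue. indicator (ball y 1) z * (- ln (norm (y - z))) * f z)))
    \<le> (\<integral>\<^sup>+ z. ennreal (indicator (ball x 2) z * f z * exp (t * m * max 0 (- ln (norm (y - z))))) \<partial>lebesgue)"
proof -
  define W where "W = (LINT z|lebesgue. indicator (ball y 1) z * (- ln (norm (y - z))) * f z)"
  define L where "L z = max 0 (- ln (norm (y - z)))" for z
  define f2 where "f2 z = indicator (ball x 2) z * f z" for z
  define a where "a = t * W"
  have key: "f2 z * L z = indicator (ball y 1) z * (- ln (norm (y - z))) * f z" for z
  proof (cases "z \<in> ball y 1 \<and> z \<noteq> y")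
    case True
    then have d: "0 < norm (y - z)" "norm (y - z) < 1" by (auto simp: dist_norm)
    have "dist x z < 2" using True y dist_triangle[of x z y] by (auto simp: dist_commute)
    then have "z \<in> ball x 2" by simp
    moreover have "L z = - ln (norm (y - z))" using d by (simp add: L_def)
    ultimately show ?thesis using True by (simp add: f2_def)
  next
    case False
    show ?thesis
    proof (cases "z = y")
      case True then show ?thesis by (simp add: L_def)
    next
      case False
      with \<open>\<not> (z \<in> ball y 1 \<and> z \<noteq> y)\<close> have "norm (y - z) \<ge> 1" by (auto simp: dist_norm)
      then have "L z = 0" by (simp add: L_def)
      then show ?thesis using \<open>norm (y - z) \<ge> 1\<close> by (simp add: dist_norm)
    qed
  qed
  have f2i: "integrable lebesgue f2" unfolding f2_def by (rule ind_int[OF fi]) simp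
  have f2Li: "integrable lebesgue (\<lambda>z. f2 z * L z)" unfolding key by (rule wyi)
  have Weq: "W = (LINT z|lebesgue. f2 z * L z)" unfolding key W_def ..
  define lower where "lower z = exp a * ((1 - a) * f2 z + t * m * (f2 z * L z))" for z
  have li: "integrable lebesgue lower" unfolding lower_def
    using f2i f2Li by (intro integrable_mult_right Bochner_Integration.integrable_add) auto
  have intl: "integral\<^sup>L lebesgue lower = m * exp a"
  proof -
    have "integral\<^sup>L lebesgue lower = exp a * ((1 - a) * integral\<^sup>L lebesgue f2 + t * m * (LINT z|lebesgue. f2 z * L z))"
      unfolding lower_def
      by (simp add: Bochner_Integration.integral_add[OF integrable_mult_right[OF f2i] integrable_mult_right[OF f2Li]] integral_mult_right_zero)
    also have "\<dots> = exp a * ((1 - a) * m + t * m * W)"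
      using mdef by (simp add: Weq f2_def[abs_def])
    also have "\<dots> = m * exp a" by (simp add: a_def algebra_simps)
    finally show ?thesis .
  qed
  have pw: "lower z \<le> f2 z * exp (t * m * L z)" for z
  proof -
    have "1 + (t * m * L z - a) \<le> exp (t * m * L z - a)" by (rule exp_ge_add_one_self)
    then have "exp a * (1 + (t * m * L z - a)) \<le> exp a * exp (t * m * L z - a)" by simp
    also have "\<dots> = exp (t * m * L z)" by (simp add: exp_diff)
    finally have "f2 z * (exp a * (1 + (t * m * L z - a))) \<le> f2 z * exp (t * m * L z)"
      using f0[of z] by (intro mult_left_mono) (auto simp: f2_def)
    then show ?thesis by (simp add: lower_def algebra_simps)
  qed
  have "m * exp a = integral\<^sup>L lebesgue lower" using intl by simp
  also have "\<dots> \<le> integral\<^sup>L lebesgue (\<lambda>z. max 0 (lower z))"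
    using li by (intro integral_mono) (auto intro!: integrable_max)
  finally have "ennreal (m * exp a) \<le> ennreal (integral\<^sup>L lebesgue (\<lambda>z. max 0 (lower z)))"
    by (rule ennreal_leI)
  also have "\<dots> = (\<integral>\<^sup>+ z. ennreal (max 0 (lower z)) \<partial>lebesgue)"
    using li by (intro nn_integral_eq_integral[symmetric]) (auto intro!: integrable_max)
  also have "\<dots> \<le> (\<integral>\<^sup>+ z. ennreal (f2 z * exp (t * m * L z)) \<partial>lebesgue)"
  proof (intro nn_integral_mono ennreal_leI)
    fix z
    have "0 \<le> f2 z * exp (t * m * L z)" using f0[of z] by (simp add: f2_def)
    then show "max 0 (lower z) \<le> f2 z * exp (t * m * L z)" using pw[of z] by simp
  qed
  finally have "ennreal (m * exp (t * W)) \<le> (\<integral>\<^sup>+ z. ennreal (f2 z * exp (t * m * L z)) \<partial>lebesgue)"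
    by (simp add: a_def)
  then show ?thesis unfolding W_def f2_def L_def .
qed




lemma dyadic_level:
  fixes d :: real
  assumes "0 < d" "d < 1"
  shows "\<exists>k::nat. (1/2)^(k+1) \<le> d \<and> d < (1/2)^k"
proof -
  obtain n where n: "(1/2::real)^n < d" using real_arch_pow_inv[of d "1/2"] assms by auto
  define k where "k = (LEAST k. (1/2::real)^(k+1) \<le> d)"
  have ex: "(1/2::real)^(n+1) \<le> d"
  proof -
    have "(1/2::real)^(n+1) \<le> (1/2)^n" by (simp add: power_decreasing)
    then show ?thesis using n by linarith
  qed
  have k1: "(1/2::real)^(k+1) \<le> d" unfolding k_def by (rule LeastI[of _ n]) (rule ex)
  have k2: "d < (1/2)^k"
  proof (cases k)
    case 0 then show ?thesis using assms by simp
  next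
    case (Suc j)
    have "\<not> (1/2::real)^(j+1) \<le> d"
    proof
      assume "(1/2::real)^(j+1) \<le> d"
      then have "k \<le> j" unfolding k_def by (rule Least_le)
      then show False using Suc by simp
    qed
    then show ?thesis using Suc by simp
  qed
  show ?thesis using k1 k2 by blast
qed

lemma sing_int_lborel:
  fixes z :: "'a::euclidean_space"
  assumes N2: "DIM('a) \<ge> 2"
  shows "(\<integral>\<^sup>+ y. ennreal (indicator (ball z 1) y / norm (y - z)) \<partial>lborel) \<le> ennreal (4 * unit_ball_vol (DIM('a)))"
proof -
  define V where "V = unit_ball_vol (DIM('a))"
  have V0: "V \<ge> 0" by (simp add: V_def)
  define g where "g k y = ennreal (2^(k+1)) * indicator (ball z ((1/2)^k)) y" for k :: nat and y :: 'a
  have pw: "ennreal (indicator (ball z 1) y / norm (y - z)) \<le> (\<Sum>k. g k y)" for y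
  proof (cases "y \<in> ball z 1 \<and> y \<noteq> z")
    case False
    then show ?thesis by (auto simp: indicator_def)
  next
    case True
    define d where "d = norm (y - z)"
    have d: "0 < d" "d < 1" using True by (auto simp: d_def dist_norm norm_minus_commute)
    obtain k :: nat where k: "(1/2)^(k+1) \<le> d" "d < (1/2)^k" using dyadic_level[OF d] by blast
    have "1 / d \<le> 1 / (1/2)^(k+1)" using k(1) d(1) by (intro divide_left_mono) (auto intro: mult_pos_pos)
    also have "\<dots> = 2^(k+1)" by (simp add: power_one_over)
    finally have b: "1 / d \<le> 2^(k+1)" .
    have iny: "y \<in> ball z ((1/2)^k)" using k(2) by (simp add: d_def dist_norm norm_minus_commute)
    have "ennreal (indicator (ball z 1) y / norm (y - z)) = ennreal (1 / d)"
      using True by (simp add: d_def)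
    also have "\<dots> \<le> g k y" using b iny by (simp add: g_def ennreal_leI)
    also have "\<dots> \<le> (\<Sum>i<Suc k. g i y)" by (rule member_le_sum) auto
    also have "\<dots> \<le> (\<Sum>i. g i y)" by (rule sum_le_suminf) auto
    finally show ?thesis .
  qed
  have gm: "\<And>k. (\<lambda>y. g k y) \<in> borel_measurable lborel"
    unfolding g_def by (intro borel_measurable_times_ennreal borel_measurable_const borel_measurable_indicator) auto
  have "(\<integral>\<^sup>+ y. ennreal (indicator (ball z 1) y / norm (y - z)) \<partial>lborel) \<le> (\<integral>\<^sup>+ y. (\<Sum>k. g k y) \<partial>lborel)"
    by (intro nn_integral_mono pw)
  also have "\<dots> = (\<Sum>k. integral\<^sup>N lborel (g k))"
    by (rule nn_integral_suminf) (rule gm)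
  also have "\<dots> = (\<Sum>k. ennreal (2^(k+1) * (V * ((1/2)^k)^DIM('a))))"
  proof (intro suminf_cong)
    fix k
    have "integral\<^sup>N lborel (g k) = ennreal (2^(k+1)) * emeasure lborel (ball z ((1/2)^k))"
      unfolding g_def by (rule nn_integral_cmult_indicator) simp
    also have "\<dots> = ennreal (2^(k+1)) * ennreal (V * ((1/2)^k)^DIM('a))"
      by (subst emeasure_ball) (auto simp: V_def)
    also have "\<dots> = ennreal (2^(k+1) * (V * ((1/2)^k)^DIM('a)))"
      by (simp add: ennreal_mult V0)
    finally show "integral\<^sup>N lborel (g k) = ennreal (2^(k+1) * (V * ((1/2)^k)^DIM('a)))" .
  qed
  also have "\<dots> \<le> (\<Sum>k. ennreal ((2 * V) * (1/2)^k))"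
  proof (intro suminf_le ennreal_leI)
    fix k
    have "((1/2::real)^k)^DIM('a) \<le> ((1/2)^k)^2" using N2 by (intro power_decreasing) (auto intro: power_le_one)
    also have "\<dots> = (1/2)^k * (1/2)^k" by (simp add: power2_eq_square)
    finally have "((1/2::real)^k)^DIM('a) \<le> (1/2)^k * (1/2)^k" .
    then have "2^(k+1) * (V * ((1/2::real)^k)^DIM('a)) \<le> 2^(k+1) * (V * ((1/2)^k * (1/2)^k))"
      using V0 by (intro mult_left_mono) auto
    also have "\<dots> = (2 * V) * (1/2)^k"
      by (simp add: power_one_over field_simps power_add)
    finally show "2^(k+1) * (V * ((1/2::real)^k)^DIM('a)) \<le> (2 * V) * (1/2)^k" .
  qed auto
  also have "\<dots> = ennreal (4 * V)"
  proof (rule suminf_ennreal_eq)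
    show "\<And>i. 0 \<le> 2 * V * (1 / 2) ^ i" using V0 by simp
    have "(\<lambda>k. (1/2::real)^k) sums (1 / (1 - 1/2))" by (rule geometric_sums) simp
    then have "(\<lambda>k. (2 * V) * (1/2::real)^k) sums ((2 * V) * (1 / (1 - 1/2)))" by (rule sums_mult)
    then show "(\<lambda>k. (2 * V) * (1/2::real)^k) sums (4 * V)" by simp
  qed
  finally show ?thesis by (simp add: V_def)
qed

lemma sing_int:
  fixes z :: "'a::euclidean_space"
  assumes N2: "DIM('a) \<ge> 2"
  shows "(\<integral>\<^sup>+ y. ennreal (indicator (ball z 1) y / norm (y - z)) \<partial>lebesgue) \<le> ennreal (4 * unit_ball_vol (DIM('a)))"
  using sing_int_lborel[OF N2, of z] by (simp add: nn_integral_completion)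




lemma sq_ln_bound:
  fixes d :: real
  assumes "0 < d" "d < 1"
  shows "(- ln d)^2 \<le> 1 / d"
proof -
  define u where "u = - ln d"
  have u0: "u \<ge> 0" using assms by (simp add: u_def)
  have e1: "exp 1 \<ge> (2::real)" using exp_ge_add_one_self[of 1] by simp
  have "1 + (u/2 - 1) \<le> exp (u/2 - 1)" by (rule exp_ge_add_one_self)
  then have "u/2 \<le> exp (u/2) / exp 1" by (simp add: exp_diff)
  then have "u/2 * exp 1 \<le> exp (u/2)" by (simp add: field_simps)
  moreover have "u/2 * 2 \<le> u/2 * exp 1" using u0 e1 by (intro mult_left_mono) auto
  ultimately have ub: "u \<le> exp (u/2)" by linarith
  have "u^2 \<le> (exp (u/2))^2" using ub u0 by (intro power_mono) auto
  also have "\<dots> = exp u" by (simp add: power2_eq_square exp_add[symmetric])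
  also have "\<dots> = 1 / d" using assms by (simp add: u_def exp_minus inverse_eq_divide)
  finally show ?thesis by (simp add: u_def)
qed

lemma E_bound:
  fixes y z :: "real^'n"
  assumes "0 \<le> s" "s \<le> 1"
  shows "exp (s * max 0 (- ln (norm (y - z)))) \<le> 1 + indicator (ball z 1) y / norm (y - z)"
proof (cases "y \<in> ball z 1 \<and> y \<noteq> z")
  case True
  define d where "d = norm (y - z)"
  have d: "0 < d" "d < 1" using True by (auto simp: d_def dist_norm norm_minus_commute)
  have l: "- ln d > 0" using d by simp
  have "exp (s * max 0 (- ln d)) = exp (s * (- ln d))" using l by simp
  also have "\<dots> \<le> exp (- ln d)" using l assms by (intro exp_mono) (simp add: mult_left_le_one_le)
  also have "\<dots> = 1 / d" using d by (simp add: exp_minus inverse_eq_divide)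
  also have "\<dots> \<le> 1 + indicator (ball z 1) y / d" using True by simp
  finally show ?thesis by (simp add: d_def)
next
  case False
  have "max 0 (- ln (norm (y - z))) = 0"
  proof (cases "y = z")
    case True then show ?thesis by simp
  next
    case False
    with \<open>\<not> (y \<in> ball z 1 \<and> y \<noteq> z)\<close> have "norm (y - z) \<ge> 1" by (auto simp: dist_norm norm_minus_commute)
    then show ?thesis by simp
  qed
  then show ?thesis by (simp add: indicator_def)
qed




lemma ell_nonneg:
  fixes x y :: "real^'n"
  shows "indicator (ball x 1) y * (- ln (norm (x - y))) \<ge> 0"
proof (cases "y \<in> ball x 1")
  case True
  then have "norm (x - y) < 1" by (simp add: dist_norm)
  then have "ln (norm (x - y)) \<le> 0"
    by (cases "x = y") (auto intro: ln_le_zero_iff[THEN iffD2])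
  then show ?thesis using True by simp
qed simp

lemma local_bound:
  fixes f :: "real^'n \<Rightarrow> real" and x :: "real^'n" and w :: "real^'n \<Rightarrow> real"
  assumes N2: "CARD('n) \<ge> 2"
    and fm: "f \<in> borel_measurable lebesgue" and fi: "integrable lebesgue f" and f0: "\<And>y. f y \<ge> 0"
    and wdef: "\<And>y. w y = (LINT z|lebesgue. indicator (ball y 1) z * (- ln (norm (y - z))) * f z)"
    and wint: "\<And>y. integrable lebesgue (\<lambda>z. indicator (ball y 1) z * (- ln (norm (y - z))) * f z)"
    and fb: "AE y in lebesgue. y \<in> ball x 1 \<longrightarrow> f y \<le> C * exp (\<phi> * w y)"
    and C0: "C \<ge> 0" and phi: "\<phi> \<ge> 0"
    and small: "2 * \<phi> * (LINT z|lebesgue. indicator (ball x 2) z * f z) \<le> 1"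
  shows "w x \<le> C * (9 * unit_ball_vol (CARD('n)))"
proof -
  define V where "V = unit_ball_vol (CARD('n))"
  have V0: "V \<ge> 0" by (simp add: V_def)
  have DIMeq: "DIM(real^'n) = CARD('n)" by simp
  define m where "m = (LINT z|lebesgue. indicator (ball x 2) z * f z)"
  have f2i: "integrable lebesgue (\<lambda>z. indicator (ball x 2) z * f z)" by (rule ind_int[OF fi]) simp
  have m0: "m \<ge> 0" unfolding m_def using f0 by (intro integral_nonneg_AE AE_I2) simp
  have wxint: "w x = (LINT y|lebesgue. indicator (ball x 1) y * (- ln (norm (x - y))) * f y)" by (rule wdef)
  have ellf0: "\<And>y. 0 \<le> indicator (ball x 1) y * (- ln (norm (x - y))) * f y"
    by (rule mult_nonneg_nonneg[OF ell_nonneg f0])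
  show ?thesis
  proof (cases "m = 0")
    case True
    have "AE z in lebesgue. indicator (ball x 2) z * f z = 0"
      using True f2i f0 unfolding m_def by (subst (asm) integral_nonneg_eq_0_iff_AE) auto
    then have "AE y in lebesgue. indicator (ball x 1) y * (- ln (norm (x - y))) * f y = 0"
    proof (rule AE_mp, intro AE_I2 impI)
      fix y assume h: "indicator (ball x 2) y * f y = (0::real)"
      show "indicator (ball x 1) y * (- ln (norm (x - y))) * f y = 0"
      proof (cases "y \<in> ball x 1")
        case True
        then have "y \<in> ball x 2" by simp
        then show ?thesis using h by simp
      qed simp
    qed
    then have "w x = 0" unfolding wxint by (rule integral_eq_zero_AE)
    then show ?thesis using C0 V0 by (simp add: V_def)
  next
    case False
    then have mpos: "m > 0" using m0 by simp
    obtain g' where g'm: "g' \<in> borel_measurable lborel" and g'ae: "AE z in lborel. f z = g' z"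
      using completion_ex_borel_measurable_real[OF fm] by blast
    define g where "g z = max 0 (g' z)" for z
    have gm: "g \<in> borel_measurable lborel" unfolding g_def using g'm by measurable
    have g0: "\<And>z. g z \<ge> 0" by (simp add: g_def)
    have gae: "AE z in lborel. f z = g z" using g'ae
    proof (rule AE_mp)
      show "AE z in lborel. f z = g' z \<longrightarrow> f z = g z"
        by (intro AE_I2 impI) (metis f0 g_def max.absorb2)
    qed
    define s where "s = 2 * \<phi> * m"
    have s0: "0 \<le> s" "s \<le> 1" using phi m0 small by (auto simp: s_def m_def)
    define E where "E u = exp (s * max 0 (- ln (norm u)))" for u :: "real^'n"
    have Em: "E \<in> borel_measurable borel" unfolding E_def by measurable
    have d: "(\<lambda>p::(real^'n) \<times> (real^'n). fst p - snd p) \<in> borel_measurable (lborel \<Otimes>\<^sub>M lborel)"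
      by measurable
    have EdM: "(\<lambda>p::(real^'n) \<times> (real^'n). E (fst p - snd p)) \<in> borel_measurable (lborel \<Otimes>\<^sub>M lborel)"
      by (rule measurable_compose[OF d Em])
    have I2: "(indicator (ball x 2) :: real^'n \<Rightarrow> real) \<in> borel_measurable lborel"
      by (auto intro!: borel_measurable_indicator)
    have I1: "(indicator (ball x 1) :: real^'n \<Rightarrow> real) \<in> borel_measurable lborel"
      by (auto intro!: borel_measurable_indicator)
    have g2M: "(\<lambda>z. indicator (ball x 2) z * g z) \<in> borel_measurable lborel"
      using I2 gm by (rule borel_measurable_times)
    define Q where "Q p = ennreal (indicator (ball x 2) (snd p) * g (snd p) * E (fst p - snd p))" for p
    have QM: "Q \<in> borel_measurable (lborel \<Otimes>\<^sub>M lborel)"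
      unfolding Q_def
      by (rule measurable_compose[OF borel_measurable_times[OF measurable_compose[OF measurable_snd g2M] EdM] measurable_ennreal])
    define Fp where "Fp p = ennreal (indicator (ball x 1) (fst p)) * Q p" for p
    have FpM: "Fp \<in> borel_measurable (lborel \<Otimes>\<^sub>M lborel)"
      unfolding Fp_def
      by (rule borel_measurable_times_ennreal[OF measurable_compose[OF measurable_compose[OF measurable_fst I1] measurable_ennreal] QM])
    have Qy: "\<And>y. (\<lambda>z. Q (y, z)) \<in> borel_measurable lborel"
      by (rule measurable_compose[OF measurable_Pair1' QM]) simp
    have Jy: "ennreal (exp (2 * \<phi> * w y)) \<le> ennreal (1/m) * (\<integral>\<^sup>+ z. Q (y, z) \<partial>lborel)"
      if y: "y \<in> ball x 1" for y
    proof -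
      have "ennreal (m * exp ((2 * \<phi>) * (LINT z|lebesgue. indicator (ball y 1) z * (- ln (norm (y - z))) * f z)))
        \<le> (\<integral>\<^sup>+ z. ennreal (indicator (ball x 2) z * f z * exp ((2 * \<phi>) * m * max 0 (- ln (norm (y - z))))) \<partial>lebesgue)"
        using phi by (intro jensen_exp[OF fm fi f0 wint y _ m_def mpos]) auto
      also have "\<dots> = (\<integral>\<^sup>+ z. ennreal (indicator (ball x 2) z * f z * E (y - z)) \<partial>lborel)"
        by (simp add: nn_integral_completion E_def s_def mult.assoc)
      also have "\<dots> = (\<integral>\<^sup>+ z. Q (y, z) \<partial>lborel)"
      proof -
        have "AE z in lborel. ennreal (indicator (ball x 2) z * f z * E (y - z)) = Q (y, z)"
          using gae unfolding Q_def by eventually_elim simp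
        then show ?thesis by (rule nn_integral_cong_AE)
      qed
      finally have h: "ennreal (m * exp (2 * \<phi> * w y)) \<le> (\<integral>\<^sup>+ z. Q (y, z) \<partial>lborel)"
        by (simp only: wdef[of y, symmetric])
      have "ennreal (exp (2 * \<phi> * w y)) = ennreal (1/m) * ennreal (m * exp (2 * \<phi> * w y))"
        using mpos by (simp add: ennreal_mult[symmetric])
      also have "\<dots> \<le> ennreal (1/m) * (\<integral>\<^sup>+ z. Q (y, z) \<partial>lborel)"
        by (rule mult_left_mono[OF h]) simp
      finally show ?thesis .
    qed
    define B where "B y = ennreal (indicator (ball x 1) y) * (ennreal (1/m) * (\<integral>\<^sup>+ z. Q (y, z) \<partial>lborel))" for y
    define A where "A y = ennreal (indicator (ball x 1) y / norm (y - x))" for y :: "real^'n"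
    have pw: "AE y in lborel. ennreal (indicator (ball x 1) y * (- ln (norm (x - y))) * f y)
        \<le> ennreal C * (A y + B y)"
    proof -
      have "AE y in lborel. y \<in> ball x 1 \<longrightarrow> f y \<le> C * exp (\<phi> * w y)"
        using fb by (simp add: AE_completion_iff)
      then show ?thesis
      proof (rule AE_mp, intro AE_I2 impI)
        fix y assume fy: "y \<in> ball x 1 \<longrightarrow> f y \<le> C * exp (\<phi> * w y)"
        show "ennreal (indicator (ball x 1) y * (- ln (norm (x - y))) * f y) \<le> ennreal C * (A y + B y)"
        proof (cases "y \<in> ball x 1 \<and> y \<noteq> x")
          case False
          then have h0: "indicator (ball x 1) y * (- ln (norm (x - y))) * f y = 0"
            by (auto simp: indicator_def)
          show ?thesis by (subst h0) simp
        next
          case True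
          define dd where "dd = norm (x - y)"
          have dd: "0 < dd" "dd < 1" using True by (auto simp: dd_def dist_norm)
          define l where "l = - ln dd"
          have l0: "l \<ge> 0" using dd by (simp add: l_def)
          have l2: "l^2 \<le> 1 / dd" unfolding l_def by (rule sq_ln_bound[OF dd])
          define e where "e = exp (\<phi> * w y)"
          have e2: "e^2 = exp (2 * \<phi> * w y)" by (simp add: e_def power2_eq_square exp_add[symmetric])
          have "l * f y \<le> l * (C * e)" using fy True l0 by (intro mult_left_mono) (auto simp: e_def)
          also have "\<dots> = C * (l * e)" by simp
          also have "\<dots> \<le> C * (l^2 + e^2)"
          proof -
            have a: "2 * (l * e) \<le> l^2 + e^2" using sum_squares_bound[of l e] by (simp add: mult.assoc)
            have b: "0 \<le> l * e" using l0 by (simp add: e_def)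
            have "l * e \<le> l^2 + e^2" using a b by linarith
            then show ?thesis using C0 by (intro mult_left_mono) auto
          qed
          also have "\<dots> \<le> C * (1 / dd + exp (2 * \<phi> * w y))" using l2 C0 e2 by (intro mult_left_mono) auto
          finally have rb: "l * f y \<le> C * (1 / dd + exp (2 * \<phi> * w y))" .
          have "ennreal (indicator (ball x 1) y * (- ln (norm (x - y))) * f y) = ennreal (l * f y)"
            using True by (simp add: l_def dd_def)
          also have "\<dots> \<le> ennreal (C * (1 / dd + exp (2 * \<phi> * w y)))" by (rule ennreal_leI[OF rb])
          also have "\<dots> = ennreal C * (ennreal (1 / dd) + ennreal (exp (2 * \<phi> * w y)))"
            using C0 dd by (simp add: ennreal_mult)
          also have "\<dots> \<le> ennreal C * (A y + B y)"
          proof (intro mult_left_mono add_mono)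
            show "ennreal (1 / dd) \<le> A y" using True by (simp add: A_def dd_def norm_minus_commute)
            show "ennreal (exp (2 * \<phi> * w y)) \<le> B y" using Jy[of y] True by (simp add: B_def)
          qed auto
          finally show ?thesis .
        qed
      qed
    qed
    have AM: "A \<in> borel_measurable lborel" unfolding A_def
      by (rule measurable_compose[OF _ measurable_ennreal]) (intro borel_measurable_divide I1, measurable)
    have Beq: "B y = ennreal (1/m) * (\<integral>\<^sup>+ z. Fp (y, z) \<partial>lborel)" for y
    proof -
      have "(\<integral>\<^sup>+ z. Fp (y, z) \<partial>lborel) = ennreal (indicator (ball x 1) y) * (\<integral>\<^sup>+ z. Q (y, z) \<partial>lborel)"
        unfolding Fp_def by (simp add: nn_integral_cmult[OF Qy])
      then show ?thesis by (simp add: B_def mult_ac)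
    qed
    have BM: "B \<in> borel_measurable lborel"
    proof -
      have "(\<lambda>y. \<integral>\<^sup>+ z. Fp (y, z) \<partial>lborel) \<in> borel_measurable lborel"
        by (rule lborel.borel_measurable_nn_integral_fst[OF FpM])
      then have "(\<lambda>y. ennreal (1/m) * (\<integral>\<^sup>+ z. Fp (y, z) \<partial>lborel)) \<in> borel_measurable lborel"
        by (rule borel_measurable_times_ennreal[OF borel_measurable_const])
      moreover have "B = (\<lambda>y. ennreal (1/m) * (\<integral>\<^sup>+ z. Fp (y, z) \<partial>lborel))" by (simp add: fun_eq_iff Beq)
      ultimately show ?thesis by simp
    qed
    have intA: "integral\<^sup>N lborel A \<le> ennreal (4 * V)"
      unfolding A_def V_def using sing_int_lborel[of x] N2 by simp
    have inner: "(\<integral>\<^sup>+ y. Fp (y, z) \<partial>lborel) \<le> ennreal (indicator (ball x 2) z * g z) * ennreal (5 * V)" for z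
    proof -
      have EyM: "(\<lambda>y. ennreal (indicator (ball x 1) y * E (y - z))) \<in> borel_measurable lborel"
        unfolding E_def by (rule measurable_compose[OF _ measurable_ennreal]) (intro borel_measurable_times I1, measurable)
      have "(\<integral>\<^sup>+ y. Fp (y, z) \<partial>lborel)
          = (\<integral>\<^sup>+ y. ennreal (indicator (ball x 2) z * g z) * ennreal (indicator (ball x 1) y * E (y - z)) \<partial>lborel)"
        unfolding Fp_def Q_def using g0[of z]
        by (intro nn_integral_cong) (simp add: ennreal_mult[symmetric] E_def mult_ac)
      also have "\<dots> = ennreal (indicator (ball x 2) z * g z) * (\<integral>\<^sup>+ y. ennreal (indicator (ball x 1) y * E (y - z)) \<partial>lborel)"
        by (rule nn_integral_cmult[OF EyM])
      also have "\<dots> \<le> ennreal (indicator (ball x 2) z * g z) * ennreal (5 * V)"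
      proof (rule mult_left_mono)
        have "(\<integral>\<^sup>+ y. ennreal (indicator (ball x 1) y * E (y - z)) \<partial>lborel)
            \<le> (\<integral>\<^sup>+ y. ennreal (indicator (ball x 1) y) + ennreal (indicator (ball z 1) y / norm (y - z)) \<partial>lborel)"
        proof (intro nn_integral_mono)
          fix y
          have Eb: "E (y - z) \<le> 1 + indicator (ball z 1) y / norm (y - z)"
            unfolding E_def by (rule E_bound[OF s0])
          have E0: "E (y - z) \<ge> 0" by (simp add: E_def)
          have h: "indicator (ball x 1) y * E (y - z) \<le> indicator (ball x 1) y + indicator (ball z 1) y / norm (y - z)"
            using Eb E0 by (cases "y \<in> ball x 1") (auto simp: indicator_def)
          have nn: "0 \<le> (indicator (ball x 1) y :: real)" "0 \<le> (indicator (ball z 1) y / norm (y - z) :: real)"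
            by auto
          show "ennreal (indicator (ball x 1) y * E (y - z)) \<le> ennreal (indicator (ball x 1) y) + ennreal (indicator (ball z 1) y / norm (y - z))"
            using ennreal_leI[OF h] nn by simp
        qed
        also have "\<dots> = (\<integral>\<^sup>+ y. ennreal (indicator (ball x 1) y) \<partial>lborel) + (\<integral>\<^sup>+ y. ennreal (indicator (ball z 1) y / norm (y - z)) \<partial>lborel)"
        proof (rule nn_integral_add)
          show "(\<lambda>y. ennreal (indicator (ball x 1) y)) \<in> borel_measurable lborel"
            by (rule measurable_compose[OF I1 measurable_ennreal])
          show "(\<lambda>y. ennreal (indicator (ball z 1) y / norm (y - z))) \<in> borel_measurable lborel"
            by (rule measurable_compose[OF _ measurable_ennreal]) (intro borel_measurable_divide borel_measurable_indicator, auto)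
        qed
        also have "\<dots> \<le> ennreal V + ennreal (4 * V)"
        proof (rule add_mono)
          have "(\<integral>\<^sup>+ y. ennreal (indicator (ball x 1) y) \<partial>lborel) = emeasure lborel (ball x 1)"
            by (simp add: ennreal_indicator)
          also have "\<dots> = ennreal V" by (subst emeasure_ball) (auto simp: V_def)
          finally show "(\<integral>\<^sup>+ y. ennreal (indicator (ball x 1) y) \<partial>lborel) \<le> ennreal V" by simp
          show "(\<integral>\<^sup>+ y. ennreal (indicator (ball z 1) y / norm (y - z)) \<partial>lborel) \<le> ennreal (4 * V)"
            unfolding V_def using sing_int_lborel[of z] N2 by simp
        qed
        also have "\<dots> = ennreal (5 * V)" using V0 by (simp add: ennreal_plus[symmetric])
        finally show "(\<integral>\<^sup>+ y. ennreal (indicator (ball x 1) y * E (y - z)) \<partial>lborel) \<le> ennreal (5 * V)" .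
      qed simp
      finally show ?thesis .
    qed
    have intg: "(\<integral>\<^sup>+ z. ennreal (indicator (ball x 2) z * g z) \<partial>lborel) = ennreal m"
    proof -
      have "(\<integral>\<^sup>+ z. ennreal (indicator (ball x 2) z * g z) \<partial>lborel) = (\<integral>\<^sup>+ z. ennreal (indicator (ball x 2) z * f z) \<partial>lborel)"
      proof -
        have "AE z in lborel. ennreal (indicator (ball x 2) z * g z) = ennreal (indicator (ball x 2) z * f z)"
          using gae by eventually_elim simp
        then show ?thesis by (rule nn_integral_cong_AE)
      qed
      also have "\<dots> = (\<integral>\<^sup>+ z. ennreal (indicator (ball x 2) z * f z) \<partial>lebesgue)"
        by (simp add: nn_integral_completion)
      also have "\<dots> = ennreal m" unfolding m_def
        using f2i f0 by (intro nn_integral_eq_integral) auto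
      finally show ?thesis .
    qed
    have intB: "integral\<^sup>N lborel B \<le> ennreal (5 * V)"
    proof -
      have "integral\<^sup>N lborel B = ennreal (1/m) * (\<integral>\<^sup>+ y. (\<integral>\<^sup>+ z. Fp (y, z) \<partial>lborel) \<partial>lborel)"
        unfolding Beq by (rule nn_integral_cmult[OF lborel.borel_measurable_nn_integral_fst[OF FpM]])
      also have "(\<integral>\<^sup>+ y. (\<integral>\<^sup>+ z. Fp (y, z) \<partial>lborel) \<partial>lborel) = (\<integral>\<^sup>+ z. (\<integral>\<^sup>+ y. Fp (y, z) \<partial>lborel) \<partial>lborel)"
        by (rule lborel_pair.Fubini[OF FpM, symmetric])
      also have "\<dots> \<le> (\<integral>\<^sup>+ z. ennreal (indicator (ball x 2) z * g z) * ennreal (5 * V) \<partial>lborel)"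
        by (intro nn_integral_mono inner)
      also have "\<dots> = (\<integral>\<^sup>+ z. ennreal (indicator (ball x 2) z * g z) \<partial>lborel) * ennreal (5 * V)"
        by (rule nn_integral_multc) (rule measurable_compose[OF g2M measurable_ennreal])
      also have "\<dots> = ennreal m * ennreal (5 * V)" by (simp add: intg)
      finally have "integral\<^sup>N lborel B \<le> ennreal (1/m) * (ennreal m * ennreal (5 * V))"
        by (simp add: mult_left_mono)
      also have "\<dots> = ennreal (5 * V)"
        using mpos V0 by (simp add: ennreal_mult[symmetric] mult.assoc[symmetric])
      finally show ?thesis .
    qed
    have "ennreal (w x) = (\<integral>\<^sup>+ y. ennreal (indicator (ball x 1) y * (- ln (norm (x - y))) * f y) \<partial>lebesgue)"
      unfolding wxint using wint[of x] ellf0 by (intro nn_integral_eq_integral[symmetric]) auto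
    also have "\<dots> = (\<integral>\<^sup>+ y. ennreal (indicator (ball x 1) y * (- ln (norm (x - y))) * f y) \<partial>lborel)"
      by (simp add: nn_integral_completion)
    also have "\<dots> \<le> (\<integral>\<^sup>+ y. ennreal C * (A y + B y) \<partial>lborel)"
      by (rule nn_integral_mono_AE[OF pw])
    also have "\<dots> = ennreal C * (integral\<^sup>N lborel A + integral\<^sup>N lborel B)"
      using AM BM by (simp add: nn_integral_cmult nn_integral_add)
    also have "\<dots> \<le> ennreal C * (ennreal (4 * V) + ennreal (5 * V))"
      by (intro mult_left_mono add_mono intA intB) auto
    also have "\<dots> = ennreal (C * (9 * V))"
      using C0 V0 by (simp add: ennreal_mult[symmetric] ennreal_plus[symmetric] algebra_simps)
    finally have "ennreal (w x) \<le> ennreal (C * (9 * V))" .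
    then show ?thesis using C0 V0 by (simp add: V_def ennreal_le_iff)
  qed
qed




lemma v_upper:
  fixes f v :: "real^'n \<Rightarrow> real"
  assumes fm: "f \<in> borel_measurable lebesgue" and fi: "integrable lebesgue f" and f0: "\<And>y. f y \<ge> 0"
    and hint: "\<And>x. integrable lebesgue (\<lambda>y. ln ((1 + norm y) / norm (x - y)) * f y)"
    and gam: "\<gamma> > 0"
    and veq: "\<And>x. v x = 1 / \<gamma> * (LINT y|lebesgue. ln ((1 + norm y) / norm (x - y)) * f y) + c"
    and apos: "(LINT y|lebesgue. f y) > 0"
  shows "\<exists>R0. \<forall>y. R0 \<le> norm y \<longrightarrow>
     v y \<le> (LINT z|lebesgue. indicator (ball y 1) z * (- ln (norm (y - z))) * f z) / \<gamma> + c"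
proof -
  define \<alpha> where "\<alpha> = (LINT y|lebesgue. f y)"
  have a0: "\<alpha> > 0" using apos by (simp add: \<alpha>_def)
  obtain \<rho>1 :: nat where t1: "(LINT y|lebesgue. indicator {y. real \<rho>1 < norm y} y * f y) < \<alpha> / 10"
    using tail_small[OF fm fi, of "\<alpha> / 10"] a0 by auto
  define t where "t = (LINT y|lebesgue. indicator {y. real \<rho>1 < norm y} y * f y)"
  have t0: "t \<ge> 0" unfolding t_def using f0 by (intro integral_nonneg_AE AE_I2) (simp add: indicator_def)
  define A1 where "A1 = ln 2 + ln (1 + real \<rho>1)"
  define R0 where "R0 = max 3 (max (2 * real \<rho>1) (exp (2 * A1)))"
  show ?thesis
  proof (intro exI allI impI)
    fix y :: "real^'n" assume yR: "R0 \<le> norm y"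
    define T where "T = ln (norm y)"
    have y3: "norm y \<ge> 3" using yR by (simp add: R0_def)
    have yr: "2 * real \<rho>1 \<le> norm y" using yR by (simp add: R0_def)
    have ye: "exp (2 * A1) \<le> norm y" using yR by (simp add: R0_def)
    have T0: "T \<ge> 0" using y3 by (simp add: T_def)
    have TA: "2 * A1 \<le> T" using ye y3 unfolding T_def by (metis exp_le_cancel_iff exp_ln not_numeral_le_zero order_le_less_trans zero_less_one less_le_trans le_less_trans order.trans linorder_not_le dual_order.trans)
    have sb: "(LINT z|lebesgue. ln ((1 + norm z) / norm (y - z)) * f z) + \<alpha> * T
      \<le> A1 * \<alpha> + 5 * T * t + (LINT z|lebesgue. indicator (ball y 1) z * (- ln (norm (y - z))) * f z)"
      using split_bound[OF fm fi f0 hint y3 _ yr] unfolding \<alpha>_def T_def t_def A1_def by simp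
    have "5 * T * t \<le> 5 * T * (\<alpha> / 10)" using t1 T0 by (intro mult_left_mono) (auto simp: t_def)
    moreover have "A1 * \<alpha> \<le> (T / 2) * \<alpha>" using TA a0 by (intro mult_right_mono) auto
    ultimately have hG: "(LINT z|lebesgue. ln ((1 + norm z) / norm (y - z)) * f z)
        \<le> (LINT z|lebesgue. indicator (ball y 1) z * (- ln (norm (y - z))) * f z)"
      using sb by (simp add: algebra_simps)
    then have "1 / \<gamma> * (LINT z|lebesgue. ln ((1 + norm z) / norm (y - z)) * f z)
        \<le> (LINT z|lebesgue. indicator (ball y 1) z * (- ln (norm (y - z))) * f z) / \<gamma>"
      using divide_right_mono[OF hG, of \<gamma>] gam by simp
    then show "v y \<le> (LINT z|lebesgue. indicator (ball y 1) z * (- ln (norm (y - z))) * f z) / \<gamma> + c"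
      using veq[of y] by simp
  qed
qed




lemma w_bound_far:
  fixes f v :: "real^'n \<Rightarrow> real"
  assumes N2: "CARD('n) \<ge> 2"
    and fm: "f \<in> borel_measurable lebesgue" and fi: "integrable lebesgue f" and f0: "\<And>y. f y \<ge> 0"
    and hint: "\<And>x. integrable lebesgue (\<lambda>y. ln ((1 + norm y) / norm (x - y)) * f y)"
    and gam: "\<gamma> > 0" and Nr: "Nr \<ge> 0" and C00: "C0 \<ge> 0"
    and fK: "AE y in lebesgue. 1 \<le> norm y \<longrightarrow> f y \<le> C0 * exp (Nr * v y)"
    and vup: "\<forall>y. R0 \<le> norm y \<longrightarrow>
     v y \<le> (LINT z|lebesgue. indicator (ball y 1) z * (- ln (norm (y - z))) * f z) / \<gamma> + c"
  shows "\<exists>B R1. \<forall>x. R1 \<le> norm x \<longrightarrow>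
     (LINT z|lebesgue. indicator (ball x 1) z * (- ln (norm (x - z))) * f z) \<le> B"
proof -
  define w where "w y = (LINT z|lebesgue. indicator (ball y 1) z * (- ln (norm (y - z))) * f z)" for y
  have wint: "\<And>y. integrable lebesgue (\<lambda>z. indicator (ball y 1) z * (- ln (norm (y - z))) * f z)"
    by (rule w_integrable[OF fm fi f0 hint])
  define \<phi> where "\<phi> = Nr / \<gamma>"
  have phi0: "\<phi> \<ge> 0" using Nr gam by (simp add: \<phi>_def)
  obtain \<rho>2 :: nat where t2: "(LINT y|lebesgue. indicator {y. real \<rho>2 < norm y} y * f y) < 1 / (2 * \<phi> + 1)"
    using tail_small[OF fm fi, of "1 / (2 * \<phi> + 1)"] phi0 by auto
  define C where "C = C0 * exp (Nr * c)"
  have C0': "C \<ge> 0" using C00 by (simp add: C_def)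
  define R1 where "R1 = max (R0 + 1) (max 2 (real \<rho>2 + 2))"
  have main: "\<forall>x. R1 \<le> norm x \<longrightarrow> w x \<le> C * (9 * unit_ball_vol (CARD('n)))"
  proof (intro allI impI)
    fix x :: "real^'n" assume xR: "R1 \<le> norm x"
    have fb: "AE y in lebesgue. y \<in> ball x 1 \<longrightarrow> f y \<le> C * exp (\<phi> * w y)"
      using fK
    proof (rule AE_mp, intro AE_I2 impI)
      fix y assume h: "1 \<le> norm y \<longrightarrow> f y \<le> C0 * exp (Nr * v y)" and y: "y \<in> ball x 1"
      have "norm x \<le> norm y + norm (x - y)" using norm_triangle_sub[of x y] by simp
      moreover have "norm (x - y) < 1" using y by (simp add: dist_norm)
      ultimately have ny: "norm y \<ge> R0" "norm y \<ge> 1" using xR by (auto simp: R1_def)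
      have vy: "v y \<le> w y / \<gamma> + c" using vup ny(1) by (simp add: w_def)
      have "f y \<le> C0 * exp (Nr * v y)" using h ny(2) by simp
      also have "\<dots> \<le> C0 * exp (Nr * (w y / \<gamma> + c))"
        using vy Nr C00 by (intro mult_left_mono) (auto intro: mult_left_mono)
      also have "\<dots> = C * exp (\<phi> * w y)"
        by (simp add: C_def \<phi>_def exp_add[symmetric] algebra_simps)
      finally show "f y \<le> C * exp (\<phi> * w y)" .
    qed
    have mb: "(LINT z|lebesgue. indicator (ball x 2) z * f z) \<le> (LINT y|lebesgue. indicator {y. real \<rho>2 < norm y} y * f y)"
    proof (rule integral_mono)
      show "integrable lebesgue (\<lambda>z. indicator (ball x 2) z * f z)" by (rule ind_int[OF fi]) simp
      show "integrable lebesgue (\<lambda>y. indicator {y. real \<rho>2 < norm y} y * f y)"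
        using fi open_norm_gt by (intro ind_int) auto
      fix z
      show "indicator (ball x 2) z * f z \<le> indicator {y. real \<rho>2 < norm y} z * f z"
      proof (cases "z \<in> ball x 2")
        case True
        have "norm x \<le> norm z + norm (x - z)" using norm_triangle_sub[of x z] by simp
        moreover have "norm (x - z) < 2" using True by (simp add: dist_norm)
        ultimately have "real \<rho>2 < norm z" using xR by (auto simp: R1_def)
        then show ?thesis using True by simp
      next
        case False
        then show ?thesis using f0[of z] by (simp add: indicator_def)
      qed
    qed
    have small: "2 * \<phi> * (LINT z|lebesgue. indicator (ball x 2) z * f z) \<le> 1"
    proof -
      have "2 * \<phi> * (LINT z|lebesgue. indicator (ball x 2) z * f z) \<le> 2 * \<phi> * (1 / (2 * \<phi> + 1))"
        using mb t2 phi0 by (intro mult_left_mono) auto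
      also have "\<dots> \<le> 1" using phi0 by (simp add: field_simps)
      finally show ?thesis .
    qed
    show "w x \<le> C * (9 * unit_ball_vol (CARD('n)))"
      by (rule local_bound[OF N2 fm fi f0 w_def wint fb C0' phi0 small])
  qed
  then show ?thesis unfolding w_def by blast
qed




lemma final_limit:
  fixes f v :: "real^'n \<Rightarrow> real"
  assumes fm: "f \<in> borel_measurable lebesgue" and fi: "integrable lebesgue f" and f0: "\<And>y. f y \<ge> 0"
    and hint: "\<And>x. integrable lebesgue (\<lambda>y. ln ((1 + norm y) / norm (x - y)) * f y)"
    and gam: "\<gamma> > 0"
    and veq: "\<And>x. v x = 1 / \<gamma> * (LINT y|lebesgue. ln ((1 + norm y) / norm (x - y)) * f y) + c"
    and wb: "\<And>x. R1 \<le> norm x \<Longrightarrow> (LINT z|lebesgue. indicator (ball x 1) z * (- ln (norm (x - z))) * f z) \<le> B"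
  shows "((\<lambda>x. v x / ln (norm x)) \<longlongrightarrow> - (1 / \<gamma>) * (LINT y|lebesgue. f y)) at_infinity"
proof (rule tendstoI)
  fix \<epsilon> :: real assume eps: "\<epsilon> > 0"
  define \<alpha> where "\<alpha> = (LINT y|lebesgue. f y)"
  have a0: "\<alpha> \<ge> 0" unfolding \<alpha>_def using f0 by (intro integral_nonneg_AE AE_I2) auto
  have ge: "\<gamma> * \<epsilon> > 0" using gam eps by simp
  obtain \<rho> :: nat where tr: "(LINT y|lebesgue. indicator {y. real \<rho> < norm y} y * f y) < \<epsilon> * \<gamma> / 20"
    using tail_small[OF fm fi, of "\<epsilon> * \<gamma> / 20"] ge by (auto simp: mult.commute)
  define t where "t = (LINT y|lebesgue. indicator {y. real \<rho> < norm y} y * f y)"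
  have t0: "t \<ge> 0" unfolding t_def using f0 by (intro integral_nonneg_AE AE_I2) (simp add: indicator_def)
  define A where "A = ln 2 + ln (1 + real \<rho>)"
  have A0: "A \<ge> 0" by (simp add: A_def)
  define K0 where "K0 = A * \<alpha> + max 0 B"
  have K00: "K0 \<ge> 0" using A0 a0 by (simp add: K0_def)
  define X where "X = 4 * K0 / (\<gamma> * \<epsilon>)"
  define Y where "Y = 4 * \<bar>c\<bar> / \<epsilon>"
  have X0: "X \<ge> 0" using K00 ge by (simp add: X_def)
  have Y0: "Y \<ge> 0" using eps by (simp add: Y_def)
  define R2 where "R2 = max R1 (max 3 (max (2 * real \<rho>) (exp (X + Y + 1))))"
  show "\<forall>\<^sub>F x in at_infinity. dist (v x / ln (norm x)) (- (1 / \<gamma>) * (LINT y|lebesgue. f y)) < \<epsilon>"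
    unfolding eventually_at_infinity
  proof (intro exI[of _ R2] allI impI)
    fix x :: "real^'n" assume xR: "R2 \<le> norm x"
    have x3: "norm x \<ge> 3" and xr: "2 * real \<rho> \<le> norm x" and xe: "exp (X + Y + 1) \<le> norm x"
      and x1: "R1 \<le> norm x" using xR by (auto simp: R2_def)
    define T where "T = ln (norm x)"
    have xpos: "norm x > 0" using x3 by linarith
    have TXY: "X + Y + 1 \<le> T" unfolding T_def using xe xpos by (metis exp_le_cancel_iff exp_ln)
    have TX: "X < T" and TY: "Y < T" using TXY X0 Y0 by linarith+
    have Tpos: "T > 0" using TXY X0 Y0 by linarith
    define G where "G = (LINT y|lebesgue. ln ((1 + norm y) / norm (x - y)) * f y)"
    define W where "W = (LINT z|lebesgue. indicator (ball x 1) z * (- ln (norm (x - z))) * f z)"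
    define D where "D = G + \<alpha> * T"
    have D0: "0 \<le> D" using split_lower[OF fi f0 hint, of x] x3
      by (simp add: D_def G_def \<alpha>_def T_def mult.commute)
    have Dup: "D \<le> A * \<alpha> + 5 * T * t + W"
      using split_bound[OF fm fi f0 hint x3 _ xr]
      by (simp add: D_def G_def \<alpha>_def T_def t_def A_def W_def mult.commute)
    have WB: "W \<le> max 0 B" using wb[OF x1] by (simp add: W_def)
    have D2: "D \<le> K0 + 5 * T * t" using Dup WB by (simp add: K0_def)
    have k1: "4 * K0 < T * (\<gamma> * \<epsilon>)" using TX ge by (simp add: X_def pos_divide_less_eq)
    have k2: "4 * \<bar>c\<bar> < T * \<epsilon>" using TY eps by (simp add: Y_def pos_divide_less_eq)
    have k3: "20 * t < \<epsilon> * \<gamma>" using tr by (simp add: t_def)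
    have k3': "5 * T * t * 4 < T * (\<epsilon> * \<gamma>)"
    proof -
      have "T * (20 * t) < T * (\<epsilon> * \<gamma>)" using k3 Tpos by (rule mult_strict_left_mono)
      then show ?thesis by (simp add: algebra_simps)
    qed
    have k2': "4 * (\<gamma> * \<bar>c\<bar>) < \<gamma> * (T * \<epsilon>)"
    proof -
      have "\<gamma> * (4 * \<bar>c\<bar>) < \<gamma> * (T * \<epsilon>)" using k2 gam by (rule mult_strict_left_mono)
      then show ?thesis by (simp add: algebra_simps)
    qed
    have num: "\<bar>D + \<gamma> * c\<bar> < \<epsilon> * (\<gamma> * T)"
    proof -
      have "\<bar>D + \<gamma> * c\<bar> \<le> D + \<gamma> * \<bar>c\<bar>" using D0 gam by (simp add: abs_mult abs_triangle_ineq[THEN order_trans])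
      then show ?thesis using D2 k1 k3' k2' by (simp add: algebra_simps)
    qed
    have vx: "v x = G / \<gamma> + c" using veq[of x] by (simp add: G_def)
    have eq: "v x / T - (- (1 / \<gamma>) * \<alpha>) = (D + \<gamma> * c) / (\<gamma> * T)"
      using gam Tpos by (simp add: vx D_def field_simps)
    have "dist (v x / T) (- (1 / \<gamma>) * \<alpha>) = \<bar>D + \<gamma> * c\<bar> / (\<gamma> * T)"
      using gam Tpos unfolding dist_real_def eq by (simp add: abs_divide abs_mult)
    also have "\<dots> < \<epsilon>" using num gam Tpos by (simp add: pos_divide_less_eq)
    finally show "dist (v x / ln (norm x)) (- (1 / \<gamma>) * (LINT y|lebesgue. f y)) < \<epsilon>"
      by (simp add: T_def \<alpha>_def)
  qed
qed



theorem mainTheorem11: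
  fixes K v :: "real ^ 'n \<Rightarrow> real" and c :: real
  assumes n2: "CARD('n) \<ge> 2"
    and K_meas: "K \<in> borel_measurable lebesgue"
    and K_nonneg: "\<And>x. K x \<ge> 0"
    and K_Linf: "\<exists>M. AE y in lebesgue. y \<notin> ball 0 1 \<longrightarrow> \<bar>K y\<bar> \<le> M"
    and Kv_L1: "integrable lebesgue (\<lambda>y. K y * exp (real CARD('n) * v y))"
    and int_ex: "\<And>x. integrable lebesgue
                  (\<lambda>y. ln ((1 + norm y) / norm (x - y)) * K y * exp (real CARD('n) * v y))"
    and v_eq: "\<And>x. v x = 1 / gamma_const CARD('n) *
                  (LINT y|lebesgue. ln ((1 + norm y) / norm (x - y)) * K y * exp (real CARD('n) * v y))
                  + c"
  shows "((\<lambda>x. v x / ln (norm x)) \<longlongrightarrow>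
            - (1 / gamma_const CARD('n)) * (LINT y|lebesgue. K y * exp (real CARD('n) * v y)))
          at_infinity"
proof -
  define f where "f y = K y * exp (real CARD('n) * v y)" for y
  define \<gamma> where "\<gamma> = gamma_const CARD('n)"
  have gam: "\<gamma> > 0"
    unfolding \<gamma>_def gamma_const_def sphere_vol_def
    by (intro mult_pos_pos divide_pos_pos) auto
  have fi: "integrable lebesgue f" using Kv_L1 by (simp add: f_def[abs_def])
  have fm: "f \<in> borel_measurable lebesgue" by (rule borel_measurable_integrable[OF fi])
  have f0: "\<And>y. f y \<ge> 0" using K_nonneg by (simp add: f_def)
  have hint: "integrable lebesgue (\<lambda>y. ln ((1 + norm y) / norm (x - y)) * f y)" for x
    using int_ex[of x] by (simp add: f_def mult.assoc)
  have veq: "v x = 1 / \<gamma> * (LINT y|lebesgue. ln ((1 + norm y) / norm (x - y)) * f y) + c" for x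
  proof -
    have "v x = 1 / gamma_const CARD('n) *
                  (LINT y|lebesgue. ln ((1 + norm y) / norm (x - y)) * K y * exp (real CARD('n) * v y))
                  + c" by (rule v_eq)
    then show ?thesis by (simp only: f_def \<gamma>_def mult.assoc)
  qed
  have a0: "(LINT y|lebesgue. f y) \<ge> 0" using f0 by (intro integral_nonneg_AE AE_I2) auto
  have "\<exists>B R1. \<forall>x. R1 \<le> norm x \<longrightarrow>
     (LINT z|lebesgue. indicator (ball x 1) z * (- ln (norm (x - z))) * f z) \<le> B"
  proof (cases "(LINT y|lebesgue. f y) > 0")
    case True
    obtain R0 where vup: "\<forall>y. R0 \<le> norm y \<longrightarrow>
        v y \<le> (LINT z|lebesgue. indicator (ball y 1) z * (- ln (norm (y - z))) * f z) / \<gamma> + c"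
      using v_upper[OF fm fi f0 hint gam veq True] by blast
    obtain M where M: "AE y in lebesgue. y \<notin> ball 0 1 \<longrightarrow> \<bar>K y\<bar> \<le> M" using K_Linf by blast
    have fK: "AE y in lebesgue. 1 \<le> norm y \<longrightarrow> f y \<le> max 0 M * exp (real CARD('n) * v y)"
      using M
    proof (rule AE_mp, intro AE_I2 impI)
      fix y :: "real^'n" assume h: "y \<notin> ball 0 1 \<longrightarrow> \<bar>K y\<bar> \<le> M" and y: "1 \<le> norm y"
      have "K y \<le> max 0 M" using h y K_nonneg[of y] by auto
      then show "f y \<le> max 0 M * exp (real CARD('n) * v y)"
        unfolding f_def by (intro mult_right_mono) auto
    qed
    show ?thesis by (rule w_bound_far[OF n2 fm fi f0 hint gam _ _ fK vup]) auto
  next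
    case False
    then have z: "(LINT y|lebesgue. f y) = 0" using a0 by simp
    have "AE y in lebesgue. f y = 0"
      using z fi f0 by (subst (asm) integral_nonneg_eq_0_iff_AE) auto
    then have "\<forall>x. (LINT z|lebesgue. indicator (ball x 1) z * (- ln (norm (x - z))) * f z) = 0"
    proof (intro allI)
      fix x :: "real^'n"
      assume ae: "AE y in lebesgue. f y = 0"
      have "AE z in lebesgue. indicator (ball x 1) z * (- ln (norm (x - z))) * f z = 0"
        using ae by eventually_elim simp
      then show "(LINT z|lebesgue. indicator (ball x 1) z * (- ln (norm (x - z))) * f z) = 0"
        by (rule integral_eq_zero_AE)
    qed
    then show ?thesis by auto
  qed
  then obtain B R1 where wb: "\<And>x. R1 \<le> norm x \<Longrightarrow>
     (LINT z|lebesgue. indicator (ball x 1) z * (- ln (norm (x - z))) * f z) \<le> B" by blast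
  have "((\<lambda>x. v x / ln (norm x)) \<longlongrightarrow> - (1 / \<gamma>) * (LINT y|lebesgue. f y)) at_infinity"
    by (rule final_limit[OF fm fi f0 hint gam veq wb])
  then show ?thesis by (simp add: f_def \<gamma>_def)
qed

end
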